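(* Let $G_1=(V,E_1)$ and $G_2=(V,E_2)$ be simple graphs on the same finite vertex set with degree sequences $d_1$ and $d_2$. If $d_1\succeq d_2$, then $\dim\mathcal{A}(\widehat G_1)\le\dim\mathcal{A}(\widehat G_2)$.
   Context: For real sequences $a,b$ of length $n$, with $a[i]$, $b[i]$ denoting the $i$-th largest components, $a$ majorizes $b$, written $a\succeq b$, if $\sum_{i=1}^k a[i]\ge\sum_{i=1}^k b[i]$ for $k=1,\dots,n$, with equality for $k=n$. For a simple graph $G=(V,E)$, $\widehat G$ is the complete graph $(V,\binom{V}{2})$ with pairs in $E$ colored red and the other pairs colored blue. For a 2-colored graph $H=(V,F)$, the alternating cone $\mathcal{A}(H)\subseteq\mathbb{R}^F$ is the set of $x\ge0$ such that at each vertex the sum of $x(e)$ over incident red edges equals the sum over incident blue edges. *)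

theory Defs
  imports "HOL-Analysis.Analysis" "HOL-Library.Multiset"
begin

definition decr_sort :: "real list \<Rightarrow> real list" where
  "decr_sort a = rev (sort a)"

definition majorizes :: "real list \<Rightarrow> real list \<Rightarrow> bool" where
  "majorizes a b \<longleftrightarrow> length a = length b \<and>
     (\<forall>k\<in>{1..length a}. sum_list (take k (decr_sort b)) \<le> sum_list (take k (decr_sort a))) \<and>
     sum_list a = sum_list b"

definition all_pairs :: "'a set set" where
  "all_pairs = {{u, v} | u v. u \<noteq> v}"

definition simple_graph :: "'a set set \<Rightarrow> bool" where
  "simple_graph E \<longleftrightarrow> E \<subseteq> all_pairs"

definition degree :: "'a set set \<Rightarrow> 'a \<Rightarrow> nat" where
  "degree E v = card {e \<in> E. v \<in> e}"

text \<open>Degree sequence (as a list; order is irrelevant for majorization).\<close>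
definition degree_seq :: "('a::finite) set set \<Rightarrow> real list" where
  "degree_seq E = sorted_list_of_multiset (image_mset (\<lambda>v. real (degree E v)) (mset_set (UNIV :: 'a set)))"

text \<open>Alternating cone of the 2-coloured complete graph \<open>\<widehat>G\<close>: pairs in E are red,
  the other pairs blue.  Vectors live in \<open>\<real>^{'a set}\<close> and are required to vanish
  outside the set of pairs, so that the cone is a subset of \<open>\<real>^{binom V 2}\<close>.\<close>
definition alternating_cone_hat :: "('a::finite) set set \<Rightarrow> (real ^ ('a set)) set" where
  "alternating_cone_hat E = {x.
     (\<forall>e. e \<notin> all_pairs \<longrightarrow> x $ e = 0) \<and>
     (\<forall>e. x $ e \<ge> 0) \<and>
     (\<forall>v. (\<Sum>e\<in>{e\<in>all_pairs. v \<in> e \<and> e \<in> E}. x $ e) =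
          (\<Sum>e\<in>{e\<in>all_pairs. v \<in> e \<and> e \<notin> E}. x $ e))}"

end

theory Submission
  imports Defs "HOL-Combinatorics.Permutations" "HOL-Combinatorics.Transposition"
begin

definition flipv :: "('a::finite) set set \<Rightarrow> real ^ ('a set) \<Rightarrow> real ^ ('a set)" where
  "flipv E x = (\<chi> e. if e \<in> E then - (x $ e) else x $ e)"

definition Sset :: "('a::finite) set set \<Rightarrow> 'a set set" where
  "Sset E = {e. \<exists>x\<in>alternating_cone_hat E. x $ e \<noteq> 0}"

definition Wsp :: "('a::finite) set set \<Rightarrow> (real ^ ('a set)) set" where
  "Wsp S = {z. (\<forall>e. e \<notin> S \<longrightarrow> z $ e = 0) \<and> (\<forall>v. (\<Sum>e\<in>{e\<in>all_pairs. v \<in> e}. z $ e) = 0)}"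

lemma linear_flipv: "linear (flipv E)"
  by (rule linearI) (auto simp: flipv_def vec_eq_iff)

lemma flipv_flipv[simp]: "flipv E (flipv E x) = x"
  by (auto simp: flipv_def vec_eq_iff)

lemma flipv_comp[simp]: "flipv E x $ e = (if e \<in> E then - (x $ e) else x $ e)"
  by (simp add: flipv_def)

lemma balance_iff:
  fixes x :: "real ^ ('a::finite set)"
  shows "(\<Sum>e\<in>{e\<in>all_pairs. v \<in> e \<and> e \<in> E}. x $ e) =
          (\<Sum>e\<in>{e\<in>all_pairs. v \<in> e \<and> e \<notin> E}. x $ e)
     \<longleftrightarrow> (\<Sum>e\<in>{e\<in>all_pairs. v \<in> e}. flipv E x $ e) = 0"
proof -
  have "(\<Sum>e\<in>{e\<in>all_pairs. v \<in> e}. flipv E x $ e)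
      = (\<Sum>e\<in>{e\<in>all_pairs. v \<in> e}. if e \<in> E then - (x $ e) else x $ e)" by simp
  also have "\<dots> = (\<Sum>e\<in>{e\<in>all_pairs. v \<in> e} \<inter> {e. e \<in> E}. - (x $ e))
        + (\<Sum>e\<in>{e\<in>all_pairs. v \<in> e} \<inter> - {e. e \<in> E}. x $ e)"
    by (rule sum.If_cases) simp
  also have "{e\<in>all_pairs. v \<in> e} \<inter> {e. e \<in> E} = {e\<in>all_pairs. v \<in> e \<and> e \<in> E}" by auto
  also have "{e\<in>all_pairs. v \<in> e} \<inter> - {e. e \<in> E} = {e\<in>all_pairs. v \<in> e \<and> e \<notin> E}" by auto
  finally show ?thesis by (auto simp add: sum_negf)
qed

lemma cone_iff:
  "x \<in> alternating_cone_hat E \<longleftrightarrow>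
    (\<forall>e. e \<notin> all_pairs \<longrightarrow> x $ e = 0) \<and> (\<forall>e. x $ e \<ge> 0) \<and>
    (\<forall>v. (\<Sum>e\<in>{e\<in>all_pairs. v \<in> e}. flipv E x $ e) = 0)"
  unfolding alternating_cone_hat_def using balance_iff by blast

lemma cone_add: "x \<in> alternating_cone_hat E \<Longrightarrow> y \<in> alternating_cone_hat E \<Longrightarrow> x + y \<in> alternating_cone_hat E"
  unfolding alternating_cone_hat_def by (auto simp: sum.distrib)

lemma cone_zero: "0 \<in> alternating_cone_hat E"
  unfolding alternating_cone_hat_def by auto

lemma cone_sum: "finite I \<Longrightarrow> (\<And>i. i \<in> I \<Longrightarrow> f i \<in> alternating_cone_hat E) \<Longrightarrow> sum f I \<in> alternating_cone_hat E"
  by (induction I rule: finite_induct) (auto intro: cone_add cone_zero)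

lemma cone_nonneg: "x \<in> alternating_cone_hat E \<Longrightarrow> x $ e \<ge> 0"
  unfolding alternating_cone_hat_def by auto

lemma cone_interior:
  fixes E :: "('a::finite) set set"
  shows "\<exists>xs\<in>alternating_cone_hat E. \<forall>e\<in>Sset E. xs $ e > 0"
proof -
  define w where "w e = (SOME x. x \<in> alternating_cone_hat E \<and> x $ e \<noteq> 0)" for e
  have w: "w e \<in> alternating_cone_hat E \<and> w e $ e \<noteq> 0" if "e \<in> Sset E" for e
    using that unfolding w_def Sset_def by (metis (mono_tags, lifting) mem_Collect_eq someI_ex)
  define xs where "xs = sum w (Sset E)"
  have "xs \<in> alternating_cone_hat E" unfolding xs_def
    by (rule cone_sum) (use w in auto)
  moreover have "xs $ e > 0" if "e \<in> Sset E" for e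
  proof -
    have "w e $ e > 0" using w[OF that] cone_nonneg[of "w e" E e] by auto
    also have "w e $ e \<le> (\<Sum>e'\<in>Sset E. w e' $ e)"
      by (rule member_le_sum) (use that w cone_nonneg in auto)
    finally show ?thesis by (simp add: xs_def sum_component)
  qed
  ultimately show ?thesis by blast
qed

lemma cone_sub_W: "alternating_cone_hat E \<subseteq> flipv E ` Wsp (Sset E)"
proof
  fix x assume x: "x \<in> alternating_cone_hat E"
  have "flipv E x \<in> Wsp (Sset E)"
    unfolding Wsp_def using x cone_iff[of x E] by (auto simp: Sset_def)
  then show "x \<in> flipv E ` Wsp (Sset E)" by (metis flipv_flipv image_eqI)
qed

lemma W_sub_span: "flipv E ` Wsp (Sset E) \<subseteq> span (alternating_cone_hat E)"
proof
  fix x assume "x \<in> flipv E ` Wsp (Sset E)"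
  then obtain z where z: "z \<in> Wsp (Sset E)" "x = flipv E z" by blast
  obtain xs where xs: "xs \<in> alternating_cone_hat E" "\<forall>e\<in>Sset E. xs $ e > 0"
    using cone_interior by blast
  show "x \<in> span (alternating_cone_hat E)"
  proof (cases "Sset E = {}")
    case True
    then have "z = 0" using z unfolding Wsp_def by (auto simp: vec_eq_iff)
    then have "x = 0" using z by (simp add: vec_eq_iff)
    then show ?thesis by (simp add: span_zero)
  next
    case False
    define m where "m = Min ((\<lambda>e. xs $ e) ` Sset E)"
    have mpos: "m > 0" unfolding m_def using False xs by (subst Min_gr_iff) auto
    have mle: "m \<le> xs $ e" if "e \<in> Sset E" for e unfolding m_def using that by auto
    define M where "M = (\<Sum>e\<in>UNIV. \<bar>x $ e\<bar>) + 1"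
    have Mge: "\<bar>x $ e\<bar> \<le> M - 1" for e unfolding M_def using member_le_sum[of e UNIV "\<lambda>e. \<bar>x $ e\<bar>"] by simp
    have Mpos: "M > 0" using Mge[of undefined] by linarith
    define t where "t = m / M"
    have tpos: "t > 0" unfolding t_def using mpos Mpos by simp
    have xoff: "x $ e = 0" if "e \<notin> Sset E" for e using z that unfolding Wsp_def by auto
    have "xs + t *\<^sub>R x \<in> alternating_cone_hat E"
      unfolding cone_iff
    proof (intro conjI allI impI)
      fix e :: "'a set" assume "e \<notin> all_pairs"
      moreover have "e \<notin> Sset E" using \<open>e \<notin> all_pairs\<close> unfolding Sset_def alternating_cone_hat_def by auto
      ultimately show "(xs + t *\<^sub>R x) $ e = 0" using xs(1) xoff unfolding alternating_cone_hat_def by auto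
    next
      fix e :: "'a set"
      show "(xs + t *\<^sub>R x) $ e \<ge> 0"
      proof (cases "e \<in> Sset E")
        case True
        have "t * \<bar>x $ e\<bar> \<le> t * M" using Mge[of e] tpos by (intro mult_left_mono) auto
        also have "t * M = m" unfolding t_def using Mpos by simp
        finally have "- (t * x $ e) \<le> xs $ e" using mle[OF True] by (smt (verit) abs_ge_minus_self mult_minus_right mult_left_mono tpos)
        then show ?thesis by simp
      next
        case False then show ?thesis using xoff cone_nonneg[OF xs(1)] by simp
      qed
    next
      fix v
      have "(\<Sum>e\<in>{e\<in>all_pairs. v \<in> e}. flipv E (xs + t *\<^sub>R x) $ e)
         = (\<Sum>e\<in>{e\<in>all_pairs. v \<in> e}. flipv E xs $ e) + t * (\<Sum>e\<in>{e\<in>all_pairs. v \<in> e}. z $ e)"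
      proof -
        have "flipv E (xs + t *\<^sub>R x) = flipv E xs + t *\<^sub>R z" using z(2) by (simp add: vec_eq_iff)
        then show ?thesis by (simp add: sum.distrib sum_distrib_left del: flipv_comp)
      qed
      also have "\<dots> = 0" using xs(1) z(1) unfolding cone_iff Wsp_def by simp
      finally show "(\<Sum>e\<in>{e\<in>all_pairs. v \<in> e}. flipv E (xs + t *\<^sub>R x) $ e) = 0" .
    qed
    then have "(1 / t) *\<^sub>R ((xs + t *\<^sub>R x) - xs) \<in> span (alternating_cone_hat E)"
      using xs(1) by (intro span_mul span_diff span_base) auto
    then show ?thesis using tpos by simp
  qed
qed

lemma dim_cone_le: "dim (alternating_cone_hat E) \<le> dim (Wsp (Sset E))"
proof -
  have "dim (alternating_cone_hat E) \<le> dim (flipv E ` Wsp (Sset E))"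
    by (rule dim_subset[OF cone_sub_W])
  also have "\<dots> \<le> dim (Wsp (Sset E))" by (rule dim_image_le[OF linear_flipv])
  finally show ?thesis .
qed

lemma dim_W_le: "dim (Wsp (Sset E)) \<le> dim (alternating_cone_hat E)"
proof -
  have eq: "flipv E ` (flipv E ` Wsp (Sset E)) = Wsp (Sset E)"
    by (simp add: image_comp comp_def)
  have "dim (Wsp (Sset E)) \<le> dim (flipv E ` Wsp (Sset E))"
    by (subst eq[symmetric]) (rule dim_image_le[OF linear_flipv])
  also have "\<dots> \<le> dim (span (alternating_cone_hat E))" by (rule dim_subset[OF W_sub_span])
  finally show ?thesis by simp
qed

lemma AP_image:
  assumes "bij (\<tau>::'a \<Rightarrow> 'a)"
  shows "(\<tau> ` e \<in> all_pairs) = (e \<in> all_pairs)"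
proof
  assume "e \<in> all_pairs"
  then obtain u v where "e = {u, v}" "u \<noteq> v" unfolding all_pairs_def by auto
  moreover have "\<tau> u \<noteq> \<tau> v" using assms \<open>u \<noteq> v\<close> by (metis bij_pointE)
  ultimately show "\<tau> ` e \<in> all_pairs" unfolding all_pairs_def by auto
next
  assume "\<tau> ` e \<in> all_pairs"
  then obtain a b where ab: "\<tau> ` e = {a, b}" "a \<noteq> b" unfolding all_pairs_def by auto
  have "e = inv \<tau> ` (\<tau> ` e)" using assms by (simp add: bij_is_inj image_inv_f_f)
  also have "\<dots> = {inv \<tau> a, inv \<tau> b}" using ab by simp
  finally have "e = {inv \<tau> a, inv \<tau> b}" .
  moreover have "inv \<tau> a \<noteq> inv \<tau> b" using ab assms by (metis bij_inv_eq_iff)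
  ultimately show "e \<in> all_pairs" unfolding all_pairs_def by auto
qed

lemma bij_betw_star:
  assumes "bij (\<tau>::'a \<Rightarrow> 'a)"
  shows "bij_betw ((`) \<tau>) {e\<in>all_pairs. v \<in> e} {e\<in>all_pairs. \<tau> v \<in> e}"
proof (rule bij_betw_imageI)
  show "inj_on ((`) \<tau>) {e \<in> all_pairs. v \<in> e}"
    using assms bij_is_inj[OF assms] by (auto intro!: inj_onI simp: inj_image_eq_iff)
  have inj: "inj \<tau>" using assms bij_is_inj by blast
  show "(`) \<tau> ` {e \<in> all_pairs. v \<in> e} = {e \<in> all_pairs. \<tau> v \<in> e}"
  proof safe
    fix e assume "e \<in> all_pairs" "v \<in> e"
    then show "\<tau> ` e \<in> all_pairs" "\<tau> v \<in> \<tau> ` e" using AP_image[OF assms] by auto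
  next
    fix e assume e: "e \<in> all_pairs" "\<tau> v \<in> e"
    have "e = \<tau> ` (inv \<tau> ` e)" using assms by (simp add: bij_is_surj image_f_inv_f)
    moreover have "inv \<tau> ` e \<in> all_pairs"
    proof -
      have "\<tau> ` (inv \<tau> ` e) \<in> all_pairs" using e(1) calculation by simp
      then show ?thesis using AP_image[OF assms, of "inv \<tau> ` e"] by blast
    qed
    moreover have "v \<in> inv \<tau> ` e" using e inj by (metis image_eqI inv_f_f)
    ultimately show "e \<in> (`) \<tau> ` {e \<in> all_pairs. v \<in> e}" by blast
  qed
qed

definition permv :: "('a::finite \<Rightarrow> 'a) \<Rightarrow> real ^ ('a set) \<Rightarrow> real ^ ('a set)" where
  "permv \<sigma> z = (\<chi> e. z $ (inv \<sigma> ` e))"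

lemma linear_permv: "linear (permv \<sigma>)"
  by (rule linearI) (auto simp: permv_def vec_eq_iff)

lemma sum_reindex_perm:
  assumes "bij (\<tau>::'a::finite \<Rightarrow> 'a)"
  shows "(\<Sum>e\<in>{e\<in>all_pairs. v \<in> e}. f (\<tau> ` e)) = (\<Sum>e\<in>{e\<in>all_pairs. \<tau> v \<in> e}. f e)"
  by (rule sum.reindex_bij_betw[OF bij_betw_star[OF assms]])

lemma dim_W_mono:
  fixes S1 S2 :: "('a::finite) set set"
  assumes "bij \<sigma>" "(`) \<sigma> ` S1 \<subseteq> S2"
  shows "dim (Wsp S1) \<le> dim (Wsp S2)"
proof -
  have bi: "bij (inv \<sigma>)" using assms(1) by (simp add: bij_imp_bij_inv)
  have sub: "permv \<sigma> ` Wsp S1 \<subseteq> Wsp S2"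
  proof
    fix w assume "w \<in> permv \<sigma> ` Wsp S1"
    then obtain z where z: "z \<in> Wsp S1" "w = permv \<sigma> z" by blast
    have "w $ e = 0" if "e \<notin> S2" for e
    proof -
      have "\<sigma> ` (inv \<sigma> ` e) = e" using assms(1) by (simp add: bij_is_surj image_f_inv_f)
      have "inv \<sigma> ` e \<notin> S1"
      proof
        assume "inv \<sigma> ` e \<in> S1"
        then have "\<sigma> ` (inv \<sigma> ` e) \<in> S2" by (rule subsetD[OF assms(2) imageI])
        then show False using that \<open>\<sigma> ` (inv \<sigma> ` e) = e\<close> by simp
      qed
      moreover have "w $ e = z $ (inv \<sigma> ` e)" using z(2) by (simp add: permv_def)
      moreover have "\<forall>e. e \<notin> S1 \<longrightarrow> z $ e = 0" using z(1) unfolding Wsp_def by blast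
      ultimately show ?thesis by simp
    qed
    moreover have "(\<Sum>e\<in>{e\<in>all_pairs. v \<in> e}. w $ e) = 0" for v
    proof -
      have "(\<Sum>e\<in>{e\<in>all_pairs. v \<in> e}. w $ e) = (\<Sum>e\<in>{e\<in>all_pairs. v \<in> e}. z $ (inv \<sigma> ` e))"
        using z(2) by (simp add: permv_def)
      also have "\<dots> = (\<Sum>e\<in>{e\<in>all_pairs. inv \<sigma> v \<in> e}. z $ e)"
        by (rule sum_reindex_perm[OF bi])
      also have "\<dots> = 0" using z(1) unfolding Wsp_def by blast
      finally show ?thesis .
    qed
    ultimately show "w \<in> Wsp S2" unfolding Wsp_def by blast
  qed
  have eq: "permv (inv \<sigma>) ` (permv \<sigma> ` Wsp S1) = Wsp S1"
  proof -
    have "permv (inv \<sigma>) (permv \<sigma> z) = z" for z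
    proof -
      have "inv \<sigma> ` (inv (inv \<sigma>) ` e) = e" for e :: "'a set"
        using assms(1) by (simp add: inv_inv_eq bij_is_inj image_inv_f_f)
      then show ?thesis by (simp add: permv_def vec_eq_iff)
    qed
    then have "(\<lambda>z. permv (inv \<sigma>) (permv \<sigma> z)) ` Wsp S1 = Wsp S1" by simp
    then show ?thesis by (simp only: image_comp comp_def)
  qed
  have "dim (Wsp S1) \<le> dim (permv \<sigma> ` Wsp S1)"
    by (subst (1) eq[symmetric]) (rule dim_image_le[OF linear_permv])
  also have "\<dots> \<le> dim (Wsp S2)" by (rule dim_subset[OF sub])
  finally show ?thesis .
qed

definition Pd :: "('a::finite \<Rightarrow> real) \<Rightarrow> (real ^ ('a set)) set" where
  "Pd d = {y. (\<forall>e. e \<notin> all_pairs \<longrightarrow> y $ e = 0) \<and> (\<forall>e. 0 \<le> y $ e \<and> y $ e \<le> 1) \<and>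
      (\<forall>v. (\<Sum>e\<in>{e\<in>all_pairs. v \<in> e}. y $ e) = d v)}"

definition degf :: "('a::finite) set set \<Rightarrow> 'a \<Rightarrow> real" where
  "degf E v = real (degree E v)"

definition indv :: "('a::finite) set set \<Rightarrow> real ^ ('a set)" where
  "indv E = (\<chi> e. if e \<in> E then 1 else 0)"

lemma indv_comp[simp]: "indv E $ e = (if e \<in> E then 1 else 0)"
  by (simp add: indv_def)

lemma sum_indv:
  assumes "simple_graph E"
  shows "(\<Sum>e\<in>{e\<in>all_pairs. v \<in> e}. indv E $ e) = degf E v"
proof -
  have "(\<Sum>e\<in>{e\<in>all_pairs. v \<in> e}. indv E $ e) = (\<Sum>e\<in>{e\<in>all_pairs. v \<in> e}. if e \<in> E then 1 else (0::real))"
    by simp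
  also have "\<dots> = (\<Sum>e\<in>{e\<in>all_pairs. v \<in> e} \<inter> {e. e \<in> E}. 1) + (\<Sum>e\<in>{e\<in>all_pairs. v \<in> e} \<inter> - {e. e \<in> E}. 0)"
    by (rule sum.If_cases) simp
  also have "\<dots> = real (card ({e\<in>all_pairs. v \<in> e} \<inter> {e. e \<in> E}))" by simp
  also have "{e\<in>all_pairs. v \<in> e} \<inter> {e. e \<in> E} = {e \<in> E. v \<in> e}"
    using assms unfolding simple_graph_def by auto
  finally show ?thesis by (simp add: degf_def degree_def)
qed

lemma ind_in_P: "simple_graph E \<Longrightarrow> indv E \<in> Pd (degf E)"
  unfolding Pd_def using sum_indv[of E] by (auto simp: simple_graph_def)

lemma P_to_cone:
  assumes E: "simple_graph E" and y: "y \<in> Pd (degf E)"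
  shows "flipv E (y - indv E) \<in> alternating_cone_hat E"
  unfolding cone_iff
proof (intro conjI allI impI)
  fix e :: "'a set" assume "e \<notin> all_pairs"
  then show "flipv E (y - indv E) $ e = 0" using y E unfolding Pd_def simple_graph_def by auto
next
  fix e :: "'a set" show "0 \<le> flipv E (y - indv E) $ e" using y unfolding Pd_def by auto
next
  fix v
  have "(\<Sum>e\<in>{e\<in>all_pairs. v \<in> e}. flipv E (flipv E (y - indv E)) $ e)
      = (\<Sum>e\<in>{e\<in>all_pairs. v \<in> e}. y $ e) - (\<Sum>e\<in>{e\<in>all_pairs. v \<in> e}. indv E $ e)"
    by (simp add: sum_subtractf del: indv_comp)
  also have "\<dots> = 0" using y sum_indv[OF E] unfolding Pd_def by simp
  finally show "(\<Sum>e\<in>{e\<in>all_pairs. v \<in> e}. flipv E (flipv E (y - indv E)) $ e) = 0" .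
qed

lemma P_fixed:
  assumes E: "simple_graph E" and y: "y \<in> Pd (degf E)" and e: "e \<notin> Sset E"
  shows "y $ e = indv E $ e"
proof -
  have "flipv E (y - indv E) $ e = 0" using P_to_cone[OF E y] e unfolding Sset_def by blast
  then show ?thesis by (simp split: if_splits)
qed

lemma P_interior:
  assumes E: "simple_graph E"
  shows "\<exists>y\<in>Pd (degf E). \<forall>e\<in>Sset E. 0 < y $ e \<and> y $ e < 1"
proof -
  obtain xs where xs: "xs \<in> alternating_cone_hat E" "\<forall>e\<in>Sset E. xs $ e > 0"
    using cone_interior by blast
  define T where "T = 1 + (\<Sum>e\<in>UNIV. xs $ e)"
  have xle: "xs $ e \<le> T - 1" for e
    unfolding T_def using member_le_sum[of e UNIV "\<lambda>e. xs $ e"] cone_nonneg[OF xs(1)] by simp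
  have Tpos: "T > 0" using xle[of undefined] cone_nonneg[OF xs(1), of undefined] by linarith
  define t where "t = 1 / T"
  have tpos: "t > 0" using Tpos by (simp add: t_def)
  have tx: "0 \<le> t * xs $ e \<and> t * xs $ e < 1" for e
  proof -
    have "t * xs $ e \<le> t * (T - 1)" using xle[of e] tpos by (intro mult_left_mono) auto
    also have "\<dots> < 1" using Tpos by (simp add: t_def field_simps)
    finally show ?thesis using tpos cone_nonneg[OF xs(1), of e] by simp
  qed
  define y where "y = indv E + t *\<^sub>R flipv E xs"
  have yc: "y $ e = (if e \<in> E then 1 - t * xs $ e else t * xs $ e)" for e
    by (simp add: y_def)
  have "y \<in> Pd (degf E)"
    unfolding Pd_def
  proof (intro CollectI conjI allI impI)
    fix e :: "'a set" assume "e \<notin> all_pairs"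
    then show "y $ e = 0" using E xs(1) unfolding yc simple_graph_def alternating_cone_hat_def by auto
  next
    fix e :: "'a set" show "0 \<le> y $ e" "y $ e \<le> 1" using tx[of e] unfolding yc by auto
  next
    fix v
    have "(\<Sum>e\<in>{e\<in>all_pairs. v \<in> e}. y $ e) = (\<Sum>e\<in>{e\<in>all_pairs. v \<in> e}. indv E $ e)
        + t * (\<Sum>e\<in>{e\<in>all_pairs. v \<in> e}. flipv E xs $ e)"
      unfolding y_def by (simp add: sum.distrib sum_distrib_left del: indv_comp flipv_comp)
    also have "\<dots> = degf E v" using sum_indv[OF E] xs(1) unfolding cone_iff by simp
    finally show "(\<Sum>e\<in>{e\<in>all_pairs. v \<in> e}. y $ e) = degf E v" .
  qed
  moreover have "0 < y $ e \<and> y $ e < 1" if "e \<in> Sset E" for e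
  proof -
    have "t * xs $ e > 0" using xs(2) that tpos by simp
    then show ?thesis using tx[of e] unfolding yc by auto
  qed
  ultimately show ?thesis by blast
qed

definition zo :: "real \<Rightarrow> bool" where "zo x \<longleftrightarrow> x = 0 \<or> x = 1"

definition Rel :: "('a::finite \<Rightarrow> real) \<Rightarrow> ('a \<Rightarrow> real) \<Rightarrow> bool" where
  "Rel d1 d2 \<longleftrightarrow> (\<exists>\<sigma>. bij \<sigma> \<and> (\<forall>y\<in>Pd d1. \<exists>y'\<in>Pd d2. \<forall>e. zo (y' $ (\<sigma> ` e)) \<longrightarrow> zo (y $ e)))"

lemma Rel_refl: "Rel d d"
  unfolding Rel_def by (rule exI[of _ id]) auto

lemma Rel_trans:
  assumes "Rel d1 d2" "Rel d2 d3" shows "Rel d1 d3"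
proof -
  obtain s1 where s1: "bij s1" "\<forall>y\<in>Pd d1. \<exists>y'\<in>Pd d2. \<forall>e. zo (y' $ (s1 ` e)) \<longrightarrow> zo (y $ e)"
    using assms(1) unfolding Rel_def by blast
  obtain s2 where s2: "bij s2" "\<forall>y\<in>Pd d2. \<exists>y'\<in>Pd d3. \<forall>e. zo (y' $ (s2 ` e)) \<longrightarrow> zo (y $ e)"
    using assms(2) unfolding Rel_def by blast
  have "bij (s2 \<circ> s1)" using s1(1) s2(1) by (rule bij_comp)
  moreover have "\<forall>y\<in>Pd d1. \<exists>y'\<in>Pd d3. \<forall>e. zo (y' $ ((s2 \<circ> s1) ` e)) \<longrightarrow> zo (y $ e)"
  proof
    fix y assume "y \<in> Pd d1"
    then obtain y' where y': "y' \<in> Pd d2" "\<forall>e. zo (y' $ (s1 ` e)) \<longrightarrow> zo (y $ e)" using s1(2) by blast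
    then obtain y'' where y'': "y'' \<in> Pd d3" "\<forall>e. zo (y'' $ (s2 ` e)) \<longrightarrow> zo (y' $ e)" using s2(2) by blast
    have "\<forall>e. zo (y'' $ ((s2 \<circ> s1) ` e)) \<longrightarrow> zo (y $ e)"
    proof (intro allI impI)
      fix e assume "zo (y'' $ ((s2 \<circ> s1) ` e))"
      then have "zo (y'' $ (s2 ` (s1 ` e)))" by (simp only: image_comp)
      then show "zo (y $ e)" using y'(2) y''(2) by blast
    qed
    then show "\<exists>y'\<in>Pd d3. \<forall>e. zo (y' $ ((s2 \<circ> s1) ` e)) \<longrightarrow> zo (y $ e)" using y''(1) by blast
  qed
  ultimately show ?thesis unfolding Rel_def by blast
qed

lemma P_perm:
  fixes \<pi> :: "'a::finite \<Rightarrow> 'a"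
  assumes "bij \<pi>" "y \<in> Pd d"
  shows "(\<chi> e. y $ (\<pi> ` e)) \<in> Pd (\<lambda>v. d (\<pi> v))"
  unfolding Pd_def
proof (intro CollectI conjI allI impI)
  fix e :: "'a set" assume "e \<notin> all_pairs"
  then have "\<pi> ` e \<notin> all_pairs" using AP_image[OF assms(1)] by blast
  then show "(\<chi> e. y $ (\<pi> ` e)) $ e = 0" using assms(2) unfolding Pd_def by simp
next
  fix e :: "'a set" show "0 \<le> (\<chi> e. y $ (\<pi> ` e)) $ e" "(\<chi> e. y $ (\<pi> ` e)) $ e \<le> 1"
    using assms(2) unfolding Pd_def by auto
next
  fix v
  have "(\<Sum>e\<in>{e\<in>all_pairs. v \<in> e}. (\<chi> e. y $ (\<pi> ` e)) $ e) = (\<Sum>e\<in>{e\<in>all_pairs. v \<in> e}. y $ (\<pi> ` e))"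
    by simp
  also have "\<dots> = (\<Sum>e\<in>{e\<in>all_pairs. \<pi> v \<in> e}. y $ e)" by (rule sum_reindex_perm[OF assms(1)])
  also have "\<dots> = d (\<pi> v)" using assms(2) unfolding Pd_def by blast
  finally show "(\<Sum>e\<in>{e\<in>all_pairs. v \<in> e}. (\<chi> e. y $ (\<pi> ` e)) $ e) = d (\<pi> v)" .
qed

lemma Rel_perm:
  fixes \<pi> :: "'a::finite \<Rightarrow> 'a"
  assumes "bij \<pi>" shows "Rel d (\<lambda>v. d (\<pi> v))"
  unfolding Rel_def
proof (intro exI[of _ "inv \<pi>"] conjI ballI)
  show "bij (inv \<pi>)" using assms by (simp add: bij_imp_bij_inv)
  fix y assume y: "y \<in> Pd d"
  have "\<pi> ` (inv \<pi> ` e) = e" for e :: "'a set" using assms by (simp add: bij_is_surj image_f_inv_f)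
  then have "\<forall>e. zo ((\<chi> e. y $ (\<pi> ` e)) $ (inv \<pi> ` e)) \<longrightarrow> zo (y $ e)" by simp
  then show "\<exists>y'\<in>Pd (\<lambda>v. d (\<pi> v)). \<forall>e. zo (y' $ (inv \<pi> ` e)) \<longrightarrow> zo (y $ e)"
    using P_perm[OF assms y] by blast
qed

lemma Rel_mix:
  fixes \<pi> :: "'a::finite \<Rightarrow> 'a"
  assumes "bij \<pi>" "0 < lam" "lam \<le> 1"
  shows "Rel d (\<lambda>v. lam * d v + (1 - lam) * d (\<pi> v))"
  unfolding Rel_def
proof (intro exI[of _ id] conjI ballI)
  show "bij (id::'a \<Rightarrow> 'a)" by simp
  fix y assume y: "y \<in> Pd d"
  define yp where "yp = (\<chi> e. y $ (\<pi> ` e))"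
  have yp: "yp \<in> Pd (\<lambda>v. d (\<pi> v))" unfolding yp_def by (rule P_perm[OF assms(1) y])
  define y' where "y' = lam *\<^sub>R y + (1 - lam) *\<^sub>R yp"
  have "y' \<in> Pd (\<lambda>v. lam * d v + (1 - lam) * d (\<pi> v))"
    unfolding Pd_def
  proof (intro CollectI conjI allI impI)
    fix e :: "'a set" assume "e \<notin> all_pairs"
    then show "y' $ e = 0" using y yp unfolding Pd_def y'_def by simp
  next
    fix e :: "'a set"
    have a: "0 \<le> y $ e" "y $ e \<le> 1" "0 \<le> yp $ e" "yp $ e \<le> 1" using y yp unfolding Pd_def by auto
    have "y' $ e = lam * y $ e + (1 - lam) * yp $ e" by (simp add: y'_def)
    moreover have "lam * y $ e \<le> lam" "(1 - lam) * yp $ e \<le> 1 - lam"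
      using a assms by (simp_all add: mult_left_le)
    moreover have "0 \<le> lam * y $ e" "0 \<le> (1 - lam) * yp $ e" using a assms by simp_all
    ultimately show "0 \<le> y' $ e" "y' $ e \<le> 1" by linarith+
  next
    fix v
    have "(\<Sum>e\<in>{e\<in>all_pairs. v \<in> e}. y' $ e) = lam * (\<Sum>e\<in>{e\<in>all_pairs. v \<in> e}. y $ e) + (1 - lam) * (\<Sum>e\<in>{e\<in>all_pairs. v \<in> e}. yp $ e)"
      by (simp add: y'_def sum.distrib sum_distrib_left)
    also have "\<dots> = lam * d v + (1 - lam) * d (\<pi> v)" using y yp unfolding Pd_def by simp
    finally show "(\<Sum>e\<in>{e\<in>all_pairs. v \<in> e}. y' $ e) = lam * d v + (1 - lam) * d (\<pi> v)" .
  qed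
  moreover have "zo (y $ e)" if "zo (y' $ (id ` e))" for e
  proof -
    have a: "0 \<le> y $ e" "y $ e \<le> 1" "0 \<le> yp $ e" "yp $ e \<le> 1" using y yp unfolding Pd_def by auto
    have eq: "y' $ e = lam * y $ e + (1 - lam) * yp $ e" by (simp add: y'_def)
    have b: "0 \<le> (1 - lam) * yp $ e" "(1 - lam) * yp $ e \<le> 1 - lam" using a assms by (simp_all add: mult_left_le)
    from that have "y' $ e = 0 \<or> y' $ e = 1" by (simp add: zo_def)
    then show ?thesis
    proof
      assume "y' $ e = 0"
      then have "lam * y $ e \<le> 0" using eq b by linarith
      then have "y $ e \<le> 0" using assms(2) by (simp add: mult_le_0_iff)
      then show ?thesis using a by (simp add: zo_def)
    next
      assume "y' $ e = 1"
      then have "lam * y $ e \<ge> lam * 1" using eq b by linarith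
      then have "y $ e \<ge> 1" using assms(2) by (simp add: mult_le_cancel_left)
      then show ?thesis using a by (simp add: zo_def)
    qed
  qed
  ultimately show "\<exists>y'\<in>Pd (\<lambda>v. lam * d v + (1 - lam) * d (\<pi> v)). \<forall>e. zo (y' $ (id ` e)) \<longrightarrow> zo (y $ e)"
    by blast
qed

lemma Rel_Sset:
  assumes E1: "simple_graph E1" and E2: "simple_graph E2" and R: "Rel (degf E1) (degf E2)"
  shows "\<exists>\<sigma>. bij \<sigma> \<and> (`) \<sigma> ` Sset E1 \<subseteq> Sset E2"
proof -
  obtain \<sigma> where s: "bij \<sigma>" "\<forall>y\<in>Pd (degf E1). \<exists>y'\<in>Pd (degf E2). \<forall>e. zo (y' $ (\<sigma> ` e)) \<longrightarrow> zo (y $ e)"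
    using R unfolding Rel_def by blast
  obtain y where y: "y \<in> Pd (degf E1)" "\<forall>e\<in>Sset E1. 0 < y $ e \<and> y $ e < 1"
    using P_interior[OF E1] by blast
  obtain y' where y': "y' \<in> Pd (degf E2)" "\<forall>e. zo (y' $ (\<sigma> ` e)) \<longrightarrow> zo (y $ e)"
    using s(2) y(1) by blast
  have "\<sigma> ` e \<in> Sset E2" if "e \<in> Sset E1" for e
  proof (rule ccontr)
    assume "\<sigma> ` e \<notin> Sset E2"
    then have "y' $ (\<sigma> ` e) = indv E2 $ (\<sigma> ` e)" by (rule P_fixed[OF E2 y'(1)])
    then have "zo (y' $ (\<sigma> ` e))" by (simp add: zo_def)
    then have "zo (y $ e)" using y'(2) by blast
    then show False using y(2) that by (auto simp: zo_def)
  qed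
  then show ?thesis using s(1) by blast
qed

definition decr :: "nat \<Rightarrow> (nat \<Rightarrow> real) \<Rightarrow> bool" where
  "decr n a \<longleftrightarrow> (\<forall>i j. i \<le> j \<longrightarrow> j < n \<longrightarrow> a j \<le> a i)"

definition majf :: "nat \<Rightarrow> (nat \<Rightarrow> real) \<Rightarrow> (nat \<Rightarrow> real) \<Rightarrow> bool" where
  "majf n a b \<longleftrightarrow> (\<forall>m\<le>n. (\<Sum>i<m. b i) \<le> (\<Sum>i<m. a i)) \<and> (\<Sum>i<n. a i) = (\<Sum>i<n. b i)"

lemma sum_split_nat: "(m::nat) \<le> n \<Longrightarrow> (\<Sum>i<n. f i) = (\<Sum>i<m. f i) + (\<Sum>i\<in>{m..<n}. (f i :: real))"
  using sum.atLeastLessThan_concat[of 0 m n f] by (simp add: atLeast0LessThan)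

lemma Tstep:
  assumes da: "decr n a" and db: "decr n b" and m: "majf n a b"
    and ne: "{i. i < n \<and> a i \<noteq> b i} \<noteq> {}"
  shows "\<exists>j k lam. j < n \<and> k < n \<and> 0 < lam \<and> lam \<le> 1 \<and>
     decr n (\<lambda>i. lam * a i + (1 - lam) * a (Transposition.transpose j k i)) \<and>
     majf n (\<lambda>i. lam * a i + (1 - lam) * a (Transposition.transpose j k i)) b \<and>
     card {i. i < n \<and> (lam * a i + (1 - lam) * a (Transposition.transpose j k i)) \<noteq> b i} < card {i. i < n \<and> a i \<noteq> b i}"
proof -
  have dA: "a q \<le> a p" if "p \<le> q" "q < n" for p q using da that unfolding decr_def by blast
  have dB: "b q \<le> b p" if "p \<le> q" "q < n" for p q using db that unfolding decr_def by blast
  have mA: "(\<Sum>i<m. b i) \<le> (\<Sum>i<m. a i)" if "m \<le> n" for m using m that unfolding majf_def by blast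
  have tot: "(\<Sum>i<n. a i) = (\<Sum>i<n. b i)" using m unfolding majf_def by blast
  have ex1: "\<exists>i<n. b i < a i"
  proof (rule ccontr)
    assume "\<not> ?thesis"
    then have le: "\<forall>i\<in>{..<n}. a i \<le> b i" by (meson lessThan_iff not_less)
    obtain i0 where "i0 < n" "a i0 \<noteq> b i0" using ne by blast
    then have "\<exists>i\<in>{..<n}. a i < b i" using le by force
    then have "(\<Sum>i<n. a i) < (\<Sum>i<n. b i)" using le by (intro sum_strict_mono_ex1) auto
    then show False using tot by simp
  qed
  define J where "J = {i. i < n \<and> b i < a i}"
  have finJ: "finite J" unfolding J_def by simp
  define j where "j = Max J"
  have jJ: "j \<in> J" unfolding j_def using finJ ex1 by (intro Max_in) (auto simp: J_def)
  have jn: "j < n" and bj: "b j < a j" using jJ unfolding J_def by auto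
  have jmax: "a i \<le> b i" if "j < i" "i < n" for i
  proof (rule ccontr)
    assume "\<not> a i \<le> b i"
    then have "i \<in> J" using that unfolding J_def by auto
    then have "i \<le> j" unfolding j_def using finJ by simp
    then show False using that by simp
  qed
  have ex2: "\<exists>k. j < k \<and> k < n \<and> a k < b k"
  proof (rule ccontr)
    assume "\<not> ?thesis"
    then have eqt: "a i = b i" if "j < i" "i < n" for i using jmax[OF that] that by force
    have "(\<Sum>i<n. a i) = (\<Sum>i<Suc j. a i) + (\<Sum>i\<in>{Suc j..<n}. a i)" using jn by (intro sum_split_nat) simp
    moreover have "(\<Sum>i<n. b i) = (\<Sum>i<Suc j. b i) + (\<Sum>i\<in>{Suc j..<n}. b i)" using jn by (intro sum_split_nat) simp
    moreover have "(\<Sum>i\<in>{Suc j..<n}. a i) = (\<Sum>i\<in>{Suc j..<n}. b i)" by (rule sum.cong) (auto intro: eqt)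
    moreover have "(\<Sum>i<j. b i) \<le> (\<Sum>i<j. a i)" using jn by (intro mA) simp
    ultimately show False using tot bj by simp
  qed
  define K where "K = {i. j < i \<and> i < n \<and> a i < b i}"
  have finK: "finite K" unfolding K_def by simp
  define k where "k = Min K"
  have kK: "k \<in> K" unfolding k_def using finK ex2 by (intro Min_in) (auto simp: K_def)
  have jk: "j < k" and kn: "k < n" and bk: "a k < b k" using kK unfolding K_def by auto
  have mid: "a i = b i" if "j < i" "i < k" for i
  proof -
    have "\<not> a i < b i"
    proof
      assume "a i < b i"
      then have "i \<in> K" using that kn unfolding K_def by auto
      then have "k \<le> i" unfolding k_def using finK by simp
      then show False using that by simp
    qed
    then show ?thesis using jmax[of i] that kn by force
  qed
  define \<delta> where "\<delta> = min (a j - b j) (b k - a k)"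
  have dpos: "\<delta> > 0" using bj bk by (simp add: \<delta>_def)
  have bjk: "b k \<le> b j" using dB[of j k] jk kn by simp
  define D where "D = a j - a k"
  have dD: "\<delta> < D" using bjk bk unfolding \<delta>_def D_def by simp
  have Dpos: "D > 0" using dpos dD by simp
  define lam where "lam = 1 - \<delta> / D"
  have lam0: "0 < lam" using dD Dpos by (simp add: lam_def field_simps)
  have lam1: "lam \<le> 1" using dpos Dpos by (simp add: lam_def)
  have oml: "1 - lam = \<delta> / D" by (simp add: lam_def)
  define a2 where "a2 i = (if i = j then a j - \<delta> else if i = k then a k + \<delta> else a i)" for i
  have a2eq: "(\<lambda>i. lam * a i + (1 - lam) * a (Transposition.transpose j k i)) = a2"
  proof
    fix i
    have f: "(1 - lam) * (a j - a k) = \<delta>" using Dpos unfolding oml D_def by simp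
    have e1: "lam * a j + (1 - lam) * a k = a j - \<delta>"
    proof -
      have "lam * a j + (1 - lam) * a k = a j - (1 - lam) * (a j - a k)" by (simp add: algebra_simps)
      then show ?thesis using f by simp
    qed
    have e2: "lam * a k + (1 - lam) * a j = a k + \<delta>"
    proof -
      have "lam * a k + (1 - lam) * a j = a k + (1 - lam) * (a j - a k)" by (simp add: algebra_simps)
      then show ?thesis using f by simp
    qed
    show "lam * a i + (1 - lam) * a (Transposition.transpose j k i) = a2 i"
      using jk e1 e2 by (auto simp: a2_def Transposition.transpose_def algebra_simps)
  qed
  have a2j: "b j \<le> a2 j" "a2 j \<le> a j" and a2k: "a2 k \<le> b k" "a k \<le> a2 k"
    using jk dpos by (auto simp: a2_def \<delta>_def)
  have dec2: "decr n a2"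
    unfolding decr_def
  proof (intro allI impI)
    fix p q assume pq: "p \<le> q" "q < n"
    show "a2 q \<le> a2 p"
    proof (cases "p = q")
      case True then show ?thesis by simp
    next
      case False
      then have pq': "p < q" using pq by simp
      consider "p = j" "q = k" | "p = j" "q \<noteq> k" | "p = k" | "p \<noteq> j" "p \<noteq> k" "q = j"
        | "p \<noteq> j" "p \<noteq> k" "q = k" | "p \<noteq> j" "p \<noteq> k" "q \<noteq> j" "q \<noteq> k" by blast
      then show ?thesis
      proof cases
        case 1 then show ?thesis using a2j a2k bjk by simp
      next
        case 2
        then have q: "a2 q = a q" using pq' by (simp add: a2_def)
        show ?thesis
        proof (cases "q < k")
          case True
          then have "a q = b q" using mid pq' 2 by simp
          then show ?thesis using q dB[of j q] 2 pq pq' a2j by simp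
        next
          case False
          then have "k < q" using 2 by simp
          then show ?thesis using q dA[of k q] pq a2k a2j bjk 2 by simp
        qed
      next
        case 3
        then have "q \<noteq> j" using pq' jk by auto
        then have "a2 q = a q" using pq' 3 by (simp add: a2_def)
        then show ?thesis using dA[of k q] pq pq' a2k 3 by simp
      next
        case 4
        then show ?thesis using dA[of p j] pq' jn a2j by (simp add: a2_def)
      next
        case 5
        have ap: "a2 p = a p" using 5 by (simp add: a2_def)
        show ?thesis
        proof (cases "p < j")
          case True
          then show ?thesis using ap dA[of p j] jn a2k bjk bj 5 by simp
        next
          case False
          then have "j < p" using 5 by simp
          then have "a p = b p" using mid 5 pq' by simp
          then show ?thesis using ap dB[of p k] kn pq' a2k 5 by simp
        qed
      next
        case 6
        then show ?thesis using dA[OF pq] by (simp add: a2_def)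
      qed
    qed
  qed
  have a2s: "a2 i = a i + (if i = k then \<delta> else 0) - (if i = j then \<delta> else 0)" for i
    using jk by (auto simp: a2_def)
  have suma2: "(\<Sum>i<m. a2 i) = (\<Sum>i<m. a i) + (if k < m then \<delta> else 0) - (if j < m then \<delta> else 0)" for m
    unfolding a2s by (simp add: sum.distrib sum_subtractf)
  have maj2: "majf n a2 b"
    unfolding majf_def
  proof (intro conjI allI impI)
    fix m assume mn: "m \<le> n"
    show "(\<Sum>i<m. b i) \<le> (\<Sum>i<m. a2 i)"
    proof (cases "j < m \<and> m \<le> k")
      case True
      have sa: "(\<Sum>i<m. a i) = (\<Sum>i<j. a i) + a j + (\<Sum>i\<in>{Suc j..<m}. a i)"
        using sum_split_nat[of "Suc j" m a] True by simp
      have sb: "(\<Sum>i<m. b i) = (\<Sum>i<j. b i) + b j + (\<Sum>i\<in>{Suc j..<m}. b i)"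
        using sum_split_nat[of "Suc j" m b] True by simp
      have "(\<Sum>i\<in>{Suc j..<m}. a i) = (\<Sum>i\<in>{Suc j..<m}. b i)"
        by (rule sum.cong) (use True mid in auto)
      moreover have "(\<Sum>i<j. b i) \<le> (\<Sum>i<j. a i)" using jn by (intro mA) simp
      moreover have "\<delta> \<le> a j - b j" by (simp add: \<delta>_def)
      ultimately show ?thesis using sa sb suma2[of m] True by simp
    next
      case False
      then have "(\<Sum>i<m. a2 i) = (\<Sum>i<m. a i)" using suma2[of m] jk by auto
      then show ?thesis using mA[OF mn] by simp
    qed
  next
    show "(\<Sum>i<n. a2 i) = (\<Sum>i<n. b i)" using suma2[of n] jn kn tot by simp
  qed
  have card2: "card {i. i < n \<and> a2 i \<noteq> b i} < card {i. i < n \<and> a i \<noteq> b i}"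
  proof (rule psubset_card_mono)
    show "finite {i. i < n \<and> a i \<noteq> b i}" by simp
    have sub: "{i. i < n \<and> a2 i \<noteq> b i} \<subseteq> {i. i < n \<and> a i \<noteq> b i}"
      using bj bk by (auto simp: a2_def split: if_splits)
    have "j \<notin> {i. i < n \<and> a2 i \<noteq> b i} \<or> k \<notin> {i. i < n \<and> a2 i \<noteq> b i}"
      using jk by (auto simp: a2_def \<delta>_def min_def split: if_splits)
    moreover have "j \<in> {i. i < n \<and> a i \<noteq> b i}" "k \<in> {i. i < n \<and> a i \<noteq> b i}" using jn kn bj bk by auto
    ultimately show "{i. i < n \<and> a2 i \<noteq> b i} \<subset> {i. i < n \<and> a i \<noteq> b i}" using sub by blast
  qed
  show ?thesis
    using jn kn lam0 lam1 dec2 maj2 card2 unfolding a2eq[symmetric] by blast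
qed

lemma hinv_transpose:
  fixes h :: "nat \<Rightarrow> 'a"
  assumes h: "bij_betw h {..<n} UNIV" and jn: "j < n" and kn: "k < n"
  shows "inv_into {..<n} h (Transposition.transpose (h j) (h k) v) = Transposition.transpose j k (inv_into {..<n} h v)"
proof -
  define i where "i = inv_into {..<n} h v"
  have inj: "inj_on h {..<n}" using h by (simp add: bij_betw_def)
  have hi: "h i = v" unfolding i_def using h by (simp add: bij_betw_inv_into_right)
  have iin: "i < n" unfolding i_def using bij_betwE[OF bij_betw_inv_into[OF h]] by auto
  show ?thesis
  proof (cases "i = j")
    case True
    then show ?thesis using hi inj kn by (simp add: i_def[symmetric])
  next
    case False
    note ij = False
    show ?thesis
    proof (cases "i = k")
      case True
      then show ?thesis using hi inj jn by (simp add: i_def[symmetric])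
    next
      case False
      have "v \<noteq> h j" using ij hi inj iin jn by (metis inj_on_eq_iff lessThan_iff)
      moreover have "v \<noteq> h k" using False hi inj iin kn by (metis inj_on_eq_iff lessThan_iff)
      ultimately show ?thesis using ij False by (simp add: i_def[symmetric] Transposition.transpose_def)
    qed
  qed
qed

lemma chain:
  fixes h :: "nat \<Rightarrow> 'a::finite"
  assumes h: "bij_betw h {..<n} UNIV"
  shows "decr n a \<Longrightarrow> decr n b \<Longrightarrow> majf n a b \<Longrightarrow>
    Rel (\<lambda>v. a (inv_into {..<n} h v)) (\<lambda>v. b (inv_into {..<n} h v))"
proof (induction "card {i. i < n \<and> a i \<noteq> b i}" arbitrary: a rule: less_induct)
  case less
  have hin: "inv_into {..<n} h v < n" for v using bij_betwE[OF bij_betw_inv_into[OF h]] by auto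
  show ?case
  proof (cases "{i. i < n \<and> a i \<noteq> b i} = {}")
    case True
    then have "(\<lambda>v. a (inv_into {..<n} h v)) = (\<lambda>v. b (inv_into {..<n} h v))" using hin by auto
    then show ?thesis by (simp add: Rel_refl)
  next
    case False
    obtain j k lam where jk: "j < n" "k < n" "0 < lam" "lam \<le> 1"
      "decr n (\<lambda>i. lam * a i + (1 - lam) * a (Transposition.transpose j k i))"
      "majf n (\<lambda>i. lam * a i + (1 - lam) * a (Transposition.transpose j k i)) b"
      "card {i. i < n \<and> (lam * a i + (1 - lam) * a (Transposition.transpose j k i)) \<noteq> b i} < card {i. i < n \<and> a i \<noteq> b i}"
      using Tstep[OF less.prems False] by blast
    define a' where "a' = (\<lambda>i. lam * a i + (1 - lam) * a (Transposition.transpose j k i))"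
    have IH: "Rel (\<lambda>v. a' (inv_into {..<n} h v)) (\<lambda>v. b (inv_into {..<n} h v))"
      using less.hyps[of a'] jk less.prems(2) unfolding a'_def by blast
    define \<pi> where "\<pi> = Transposition.transpose (h j) (h k)"
    have bij: "bij \<pi>" unfolding \<pi>_def by simp
    have "Rel (\<lambda>v. a (inv_into {..<n} h v))
       (\<lambda>v. lam * a (inv_into {..<n} h v) + (1 - lam) * a (inv_into {..<n} h (\<pi> v)))"
      by (rule Rel_mix[OF bij jk(3,4)])
    also have "(\<lambda>v. lam * a (inv_into {..<n} h v) + (1 - lam) * a (inv_into {..<n} h (\<pi> v)))
       = (\<lambda>v. a' (inv_into {..<n} h v))"
      unfolding a'_def \<pi>_def using hinv_transpose[OF h jk(1,2)] by simp
    finally show ?thesis using IH Rel_trans by blast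
  qed
qed

lemma sum_take:
  assumes "m \<le> length xs"
  shows "sum_list (take m xs) = (\<Sum>i<m. (xs ! i :: real))"
proof -
  have "sum_list (take m xs) = (\<Sum>i = 0..<length (take m xs). take m xs ! i)" by (rule sum_list_sum_nth)
  also have "\<dots> = (\<Sum>i<m. take m xs ! i)" using assms by (simp add: atLeast0LessThan min_def)
  also have "\<dots> = (\<Sum>i<m. xs ! i)" by (rule sum.cong) auto
  finally show ?thesis .
qed

lemma sum_decr_sort: "sum_list (decr_sort L) = sum_list L"
  by (metis decr_sort_def mset_rev mset_sort sum_mset_sum_list)

lemma length_decr_sort[simp]: "length (decr_sort L) = length L"
  by (simp add: decr_sort_def)

lemma maj_conv:
  assumes "majorizes L1 L2" "length L1 = n"
  shows "majf n (\<lambda>i. decr_sort L1 ! i) (\<lambda>i. decr_sort L2 ! i)"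
  unfolding majf_def
proof (intro conjI allI impI)
  have l2: "length L2 = n" using assms unfolding majorizes_def by simp
  fix m assume mn: "m \<le> n"
  show "(\<Sum>i<m. decr_sort L2 ! i) \<le> (\<Sum>i<m. decr_sort L1 ! i)"
  proof (cases "m = 0")
    case True then show ?thesis by simp
  next
    case False
    then have "m \<in> {1..length L1}" using mn assms(2) by simp
    then have "sum_list (take m (decr_sort L2)) \<le> sum_list (take m (decr_sort L1))"
      using assms(1) unfolding majorizes_def by blast
    then show ?thesis using mn assms(2) l2 by (simp add: sum_take)
  qed
next
  have l2: "length L2 = n" using assms unfolding majorizes_def by simp
  have "(\<Sum>i<n. decr_sort L1 ! i) = sum_list (decr_sort L1)"
    using sum_take[of n "decr_sort L1"] assms(2) by simp
  also have "\<dots> = sum_list L1" by (rule sum_decr_sort)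
  also have "\<dots> = sum_list L2" using assms(1) unfolding majorizes_def by simp
  also have "\<dots> = sum_list (decr_sort L2)" by (rule sum_decr_sort[symmetric])
  also have "\<dots> = (\<Sum>i<n. decr_sort L2 ! i)" using sum_take[of n "decr_sort L2"] l2 by simp
  finally show "(\<Sum>i<n. decr_sort L1 ! i) = (\<Sum>i<n. decr_sort L2 ! i)" .
qed

lemma seq_facts:
  fixes E :: "('a::finite) set set" and h :: "nat \<Rightarrow> 'a"
  assumes h: "bij_betw h {..<CARD('a)} UNIV"
  shows "length (degree_seq E) = CARD('a)"
    and "decr CARD('a) (\<lambda>i. decr_sort (degree_seq E) ! i)"
    and "\<exists>p. bij p \<and> (\<forall>v. degf E v = decr_sort (degree_seq E) ! (inv_into {..<CARD('a)} h (p v)))"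
proof -
  define n where "n = CARD('a)"
  define M where "M = image_mset (\<lambda>v. real (degree E v)) (mset_set (UNIV::'a set))"
  have L: "degree_seq E = sorted_list_of_multiset M" unfolding degree_seq_def M_def by simp
  have mL: "mset (degree_seq E) = M" unfolding L by simp
  have len: "length (degree_seq E) = n"
    using arg_cong[OF mL, of size] unfolding M_def n_def by simp
  then show "length (degree_seq E) = CARD('a)" by (simp add: n_def)
  show "decr CARD('a) (\<lambda>i. decr_sort (degree_seq E) ! i)"
    unfolding decr_def
  proof (intro allI impI)
    fix i j :: nat assume ij: "i \<le> j" "j < CARD('a)"
    let ?s = "sort (degree_seq E)"
    have ls: "length ?s = n" using len by simp
    have "decr_sort (degree_seq E) ! j = ?s ! (n - Suc j)"
      unfolding decr_sort_def using ij ls by (simp add: rev_nth n_def)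
    also have "\<dots> \<le> ?s ! (n - Suc i)"
      by (rule sorted_nth_mono) (use ij ls n_def in auto)
    also have "\<dots> = decr_sort (degree_seq E) ! i"
      unfolding decr_sort_def using ij ls by (simp add: rev_nth n_def)
    finally show "decr_sort (degree_seq E) ! j \<le> decr_sort (degree_seq E) ! i" .
  qed
  define hinv where "hinv = inv_into {..<n} h"
  have hb: "bij_betw hinv UNIV {..<n}" unfolding hinv_def n_def by (rule bij_betw_inv_into[OF h])
  define a where "a = (\<lambda>i. decr_sort (degree_seq E) ! i)"
  have "image_mset (degf E) (mset_set UNIV) = M" unfolding M_def by (simp add: degf_def[abs_def])
  moreover have "image_mset (\<lambda>v. a (hinv v)) (mset_set UNIV) = M"
  proof -
    have "image_mset (\<lambda>v. a (hinv v)) (mset_set UNIV) = image_mset a (image_mset hinv (mset_set UNIV))"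
      by (simp add: multiset.map_comp comp_def)
    also have "image_mset hinv (mset_set UNIV) = mset_set {..<n}"
      using hb by (simp add: image_mset_mset_set bij_betw_def)
    also have "image_mset a (mset_set {..<n}) = mset (map a [0..<n])"
      by (simp add: atLeast0LessThan)
    also have "map a [0..<n] = decr_sort (degree_seq E)"
      unfolding a_def using map_nth[of "decr_sort (degree_seq E)"] len by simp
    also have "mset (decr_sort (degree_seq E)) = M" using mL by (simp add: decr_sort_def)
    finally show ?thesis .
  qed
  ultimately have "image_mset (degf E) (mset_set UNIV) = image_mset (\<lambda>v. a (hinv v)) (mset_set UNIV)" by simp
  then obtain p where p: "p permutes UNIV" "\<forall>x\<in>UNIV. degf E x = a (hinv (p x))"
    by (rule image_mset_eq_implies_permutes[OF finite[of UNIV]])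
  then show "\<exists>p. bij p \<and> (\<forall>v. degf E v = decr_sort (degree_seq E) ! (inv_into {..<CARD('a)} h (p v)))"
    using permutes_bij unfolding a_def hinv_def n_def by blast
qed

theorem theorem2p10:
  fixes E1 E2 :: "('a::finite) set set"
  assumes "simple_graph E1" and "simple_graph E2"
    and "majorizes (degree_seq E1) (degree_seq E2)"
  shows "dim (alternating_cone_hat E1) \<le> dim (alternating_cone_hat E2)"
proof -
  define n where "n = CARD('a)"
  obtain h :: "nat \<Rightarrow> 'a" where h: "bij_betw h {..<n} UNIV"
    using ex_bij_betw_nat_finite[of "UNIV::'a set"] by (auto simp: atLeast0LessThan n_def)
  define hinv where "hinv = inv_into {..<n} h"
  define a1 where "a1 = (\<lambda>i. decr_sort (degree_seq E1) ! i)"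
  define a2 where "a2 = (\<lambda>i. decr_sort (degree_seq E2) ! i)"
  have f1: "length (degree_seq E1) = n" "decr n a1" "\<exists>p. bij p \<and> (\<forall>v. degf E1 v = a1 (hinv (p v)))"
    using seq_facts[of h E1] h unfolding n_def a1_def hinv_def by auto
  have f2: "decr n a2" "\<exists>p. bij p \<and> (\<forall>v. degf E2 v = a2 (hinv (p v)))"
    using seq_facts[of h E2] h unfolding n_def a2_def hinv_def by auto
  have mj: "majf n a1 a2" unfolding a1_def a2_def by (rule maj_conv[OF assms(3) f1(1)])
  have R12: "Rel (\<lambda>v. a1 (hinv v)) (\<lambda>v. a2 (hinv v))"
    unfolding hinv_def by (rule chain[OF h f1(2) f2(1) mj])
  obtain p1 where p1: "bij p1" "\<forall>v. degf E1 v = a1 (hinv (p1 v))" using f1(3) by blast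
  obtain p2 where p2: "bij p2" "\<forall>v. degf E2 v = a2 (hinv (p2 v))" using f2(2) by blast
  have "Rel (degf E1) (\<lambda>v. degf E1 (inv p1 v))"
    by (rule Rel_perm) (simp add: bij_imp_bij_inv p1(1))
  also have "(\<lambda>v. degf E1 (inv p1 v)) = (\<lambda>v. a1 (hinv v))"
    using p1 by (simp add: bij_is_surj surj_f_inv_f)
  finally have R1: "Rel (degf E1) (\<lambda>v. a1 (hinv v))" .
  have "Rel (\<lambda>v. a2 (hinv v)) (\<lambda>v. a2 (hinv (p2 v)))" by (rule Rel_perm[OF p2(1)])
  also have "(\<lambda>v. a2 (hinv (p2 v))) = degf E2" using p2 by auto
  finally have R2: "Rel (\<lambda>v. a2 (hinv v)) (degf E2)" .
  have "Rel (degf E1) (degf E2)" using R1 R12 R2 Rel_trans by blast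
  then obtain \<sigma> where s: "bij \<sigma>" "(`) \<sigma> ` Sset E1 \<subseteq> Sset E2"
    using Rel_Sset[OF assms(1,2)] by blast
  have "dim (alternating_cone_hat E1) \<le> dim (Wsp (Sset E1))" by (rule dim_cone_le)
  also have "\<dots> \<le> dim (Wsp (Sset E2))" by (rule dim_W_mono[OF s])
  also have "\<dots> \<le> dim (alternating_cone_hat E2)" by (rule dim_W_le)
  finally show ?thesis .
qed

end
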